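(* Consider an execution of the MBBA protocol (described in the context) in which fewer than $n/3$ of the $n$ players are malicious. For each component $c\in\{1,\dots,m\}$: if $c$-agreement holds at (the end of) some step, then it continues to hold in all subsequent steps.
   Context: Network model: $n$ players; every pair is joined by a direct private channel; synchronous steps, instantaneous delivery. Fewer than $n/3$ players are malicious (arbitrary behaviour); honest players follow the protocol and send the same message to every player. For player $i$, step $s$, component $c$ and value $v$, $\#_i^s(v,c)$ is the number of distinct players from which $i$ received in step $s$ a valid vector message whose $c$-th component is $v$ (counting $i$'s own); conflicting messages from one sender in one step are both discarded, duplicates count once. $c$-agreement holds (at a given moment) if there is a value $v$ such that the $c$-th component $b_{j,c}$ of every honest player $j$'s current vector equals $v$. Protocol MBBA: $H$ is a hash function modeled as a random oracle (outputs ordered lexicographically); $\mathrm{SIG}_i$ is a unique-signature scheme with publicly known keys; $r$ a common random string; counter $\gamma$ starts at 0. Player $i$ holds $\mathbf{b}_i\in\{0,1\}^m$ and $\mathbf{f}_i$, initially all zeros. EXIT CHECK: if $\mathbf{f}_i$ is all ones, $i$ sends $\mathbf{b}_i$ marked final (treated by receivers as $i$'s message in all later steps), outputs $\mathbf{b}_i$ and halts. STEP 1: $i$ sends $\mathbf{b}_i$; for each $c$ with $f_{i,c}=0$: if $\#_i^1(0,c)>\frac23 n$, set $b_{i,c}=0$, $f_{i,c}=1$, perform EXIT CHECK; else if $\#_i^1(1,c)>\frac23n$, set $b_{i,c}=1$; else $b_{i,c}=0$. STEP 2: $i$ sends $\mathbf{b}_i$; for each $c$ with $f_{i,c}=0$: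 if $\#_i^2(1,c)>\frac23 n$, set $b_{i,c}=1$, $f_{i,c}=1$, perform EXIT CHECK; else if $\#_i^2(0,c)>\frac23n$, set $b_{i,c}=0$; else $b_{i,c}=1$. STEP 3: $i$ sends $s_i=\mathrm{SIG}_i(r\|\gamma)$ and $\mathbf{b}_i$; for each $c$ with $f_{i,c}=0$: if $\#_i^3(0,c)>\frac23n$, $b_{i,c}=0$; else if $\#_i^3(1,c)>\frac23n$, $b_{i,c}=1$; else $b_{i,c}=k_c$, the $c$-th bit of $k=H(\min_{j\in P_i}H(s_j))$ where $P_i$ is the set of players who sent $i$ a valid STEP 3 message. Then $\gamma\leftarrow\gamma+1$ and return to STEP 1. *)

theory Defs
  imports Main
begin

text \<open>Local state of a player: current vector b (bit 1 = True), flag vector f,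
  and whether the player has halted (performed a successful EXIT CHECK).
  Components are indexed 1..m.\<close>
record pstate =
  bv :: "nat \<Rightarrow> bool"
  fv :: "nat \<Rightarrow> bool"
  halted :: bool

text \<open>Received messages of one player in one step: rcv j is the (unique) valid vector
  message received from player j (None if nothing valid, e.g. conflicting messages).
  cnt n rcv c v is the number of distinct players j < n whose valid message has
  c-th component v.\<close>
definition cnt :: "nat \<Rightarrow> (nat \<Rightarrow> (nat \<Rightarrow> bool) option) \<Rightarrow> nat \<Rightarrow> bool \<Rightarrow> nat" where
  "cnt n rcv c v = card {j. j < n \<and> (\<exists>w. rcv j = Some w \<and> w c = v)}"

definition mbba_step ::
  "nat \<Rightarrow> nat \<Rightarrow> nat \<Rightarrow> (nat \<Rightarrow> (nat \<Rightarrow> bool) option) \<Rightarrow> (nat \<Rightarrow> bool) \<Rightarrow> pstate \<Rightarrow> pstate" where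
  "mbba_step n m k rcv coin st =
    (if halted st then st else
     (let Zc = (\<lambda>c. 2 * n < 3 * cnt n rcv c False);
          Oc = (\<lambda>c. 2 * n < 3 * cnt n rcv c True);
          nb = (\<lambda>c. if c \<in> {1..m} \<and> \<not> fv st c then
                     (if k = 1 then (if Zc c then False else if Oc c then True else False)
                      else if k = 2 then (if Oc c then True else if Zc c then False else True)
                      else (if Zc c then False else if Oc c then True else coin c))
                   else bv st c);
          nf = (\<lambda>c. if c \<in> {1..m} \<and> \<not> fv st c then
                     (if k = 1 then Zc c else if k = 2 then Oc c else False)
                   else fv st c)
      in \<lparr>bv = nb, fv = nf,
          halted = ((\<exists>c\<in>{1..m}. \<not> fv st c \<and> nf c) \<and> (\<forall>c\<in>{1..m}. nf c))\<rparr>))"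

text \<open>An execution: st s i is the state of player i at the end of global step s
  (st 0 = initial state); global step s+1 is STEP (s mod 3 + 1).
  recv s i j is the valid message i received from j in global step s;
  coin s i is the bit-vector k computed by i in step s (arbitrary: abstracts the
  hash/signature common coin).\<close>
definition mbba_exec ::
  "nat \<Rightarrow> nat \<Rightarrow> nat set \<Rightarrow> (nat \<Rightarrow> nat \<Rightarrow> nat \<Rightarrow> (nat \<Rightarrow> bool) option)
    \<Rightarrow> (nat \<Rightarrow> nat \<Rightarrow> nat \<Rightarrow> bool) \<Rightarrow> (nat \<Rightarrow> nat \<Rightarrow> pstate) \<Rightarrow> bool" where
  "mbba_exec n m Bad recv coin st \<longleftrightarrow>
     Bad \<subseteq> {..<n} \<and> 3 * card Bad < n \<and>
     (\<forall>i<n. i \<notin> Bad \<longrightarrow> fv (st 0 i) = (\<lambda>_. False) \<and> \<not> halted (st 0 i)) \<and>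
     (\<forall>s i j. i < n \<and> j < n \<and> j \<notin> Bad \<longrightarrow> recv (Suc s) i j = Some (bv (st s j))) \<and>
     (\<forall>s i. i < n \<and> i \<notin> Bad \<longrightarrow>
        st (Suc s) i = mbba_step n m (s mod 3 + 1) (recv (Suc s) i) (coin (Suc s) i) (st s i))"

definition c_agreement :: "nat \<Rightarrow> nat set \<Rightarrow> (nat \<Rightarrow> nat \<Rightarrow> pstate) \<Rightarrow> nat \<Rightarrow> nat \<Rightarrow> bool" where
  "c_agreement n Bad st s c \<longleftrightarrow> (\<exists>v. \<forall>j<n. j \<notin> Bad \<longrightarrow> bv (st s j) c = v)"

end

theory Submission
  imports Defs
begin

lemma cnt_lower:
  assumes "Bad \<subseteq> {..<n}" "\<forall>j<n. j \<notin> Bad \<longrightarrow> (\<exists>w. rcv j = Some w \<and> w c = v)"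
  shows "n - card Bad \<le> cnt n rcv c v"
proof -
  have "{..<n} - Bad \<subseteq> {j. j < n \<and> (\<exists>w. rcv j = Some w \<and> w c = v)}" using assms(2) by auto
  hence "card ({..<n} - Bad) \<le> cnt n rcv c v" unfolding cnt_def
    by (intro card_mono) auto
  moreover have "card ({..<n} - Bad) = n - card Bad"
    using assms(1) by (simp add: card_Diff_subset finite_subset)
  ultimately show ?thesis by simp
qed

lemma cnt_upper:
  assumes "Bad \<subseteq> {..<n}" "\<forall>j<n. j \<notin> Bad \<longrightarrow> (\<exists>w. rcv j = Some w \<and> w c = v)"
  shows "cnt n rcv c (\<not> v) \<le> card Bad"
proof -
  have "{j. j < n \<and> (\<exists>w. rcv j = Some w \<and> w c = (\<not> v))} \<subseteq> Bad" using assms(2) by fastforce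
  thus ?thesis unfolding cnt_def using assms(1) by (intro card_mono) (auto intro: finite_subset)
qed

lemma step_pres:
  assumes ex: "mbba_exec n m Bad recv coin st"
      and c: "c \<in> {1..m}"
      and ag: "\<forall>j<n. j \<notin> Bad \<longrightarrow> bv (st s j) c = v"
  shows "\<forall>j<n. j \<notin> Bad \<longrightarrow> bv (st (Suc s) j) c = v"
proof (intro allI impI)
  fix i assume i: "i < n" "i \<notin> Bad"
  have B: "Bad \<subseteq> {..<n}" "3 * card Bad < n" using ex unfolding mbba_exec_def by auto
  have R: "\<forall>j<n. j \<notin> Bad \<longrightarrow> (\<exists>w. recv (Suc s) i j = Some w \<and> w c = v)"
    using ex ag i unfolding mbba_exec_def by auto
  have lo: "n - card Bad \<le> cnt n (recv (Suc s) i) c v" by (rule cnt_lower[OF B(1) R])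
  have hi: "cnt n (recv (Suc s) i) c (\<not> v) \<le> card Bad" by (rule cnt_upper[OF B(1) R])
  have yes: "2 * n < 3 * cnt n (recv (Suc s) i) c v" using lo B(2) by linarith
  have no: "\<not> 2 * n < 3 * cnt n (recv (Suc s) i) c (\<not> v)" using hi B(2) by linarith
  have st: "st (Suc s) i = mbba_step n m (s mod 3 + 1) (recv (Suc s) i) (coin (Suc s) i) (st s i)"
    using ex i unfolding mbba_exec_def by auto
  have old: "bv (st s i) c = v" using ag i by auto
  show "bv (st (Suc s) i) c = v"
  proof (cases v)
    case True
    then show ?thesis using st old yes no c unfolding mbba_step_def Let_def by auto
  next
    case False
    then show ?thesis using st old yes no c unfolding mbba_step_def Let_def by auto
  qed
qed

theorem lemma2:
  assumes "mbba_exec n m Bad recv coin st"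
      and "c \<in> {1..m}"
      and "c_agreement n Bad st s c"
      and "s \<le> s'"
  shows "c_agreement n Bad st s' c"
proof -
  obtain v where v: "\<forall>j<n. j \<notin> Bad \<longrightarrow> bv (st s j) c = v"
    using assms(3) unfolding c_agreement_def by auto
  have "\<forall>j<n. j \<notin> Bad \<longrightarrow> bv (st s' j) c = v"
    using assms(4)
  proof (induction s' rule: dec_induct)
    case base then show ?case using v by simp
  next
    case (step k) then show ?case using step_pres[OF assms(1) assms(2)] by blast
  qed
  thus ?thesis unfolding c_agreement_def by auto
qed

end
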